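(* Let $n\ge 3$. The cycle $C_n$ admits an $(a,d)$-distance antimagic labeling for some integers $a$ and $d\ge 0$ if and only if either $d=0$ and $n=4$, or $d=1$ and $n$ is odd.
   Context: For a finite simple graph $G=(V,E)$ with $v=|V|$ vertices and a bijection $f:V\to\{1,\dots,v\}$, the vertex-weight of $x$ is $w(x)=\sum_{y\in N(x)} f(y)$, where $N(x)$ is the set of neighbours of $x$. For integers $a$ and $d\ge 0$, $f$ is an $(a,d)$-distance antimagic labeling if the multiset of vertex-weights equals $\{a,a+d,\dots,a+(v-1)d\}$. *)

theory Defs
  imports Main "HOL-Library.Multiset"
begin

definition nbhd :: "'a set \<Rightarrow> ('a \<Rightarrow> 'a \<Rightarrow> bool) \<Rightarrow> 'a \<Rightarrow> 'a set" where
  "nbhd V E x = {y \<in> V. E x y}"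

definition vertex_weight :: "'a set \<Rightarrow> ('a \<Rightarrow> 'a \<Rightarrow> bool) \<Rightarrow> ('a \<Rightarrow> nat) \<Rightarrow> 'a \<Rightarrow> int" where
  "vertex_weight V E f x = (\<Sum>y\<in>nbhd V E x. int (f y))"

definition distance_antimagic :: "'a set \<Rightarrow> ('a \<Rightarrow> 'a \<Rightarrow> bool) \<Rightarrow> ('a \<Rightarrow> nat) \<Rightarrow> int \<Rightarrow> int \<Rightarrow> bool" where
  "distance_antimagic V E f a d \<longleftrightarrow>
     bij_betw f V {1..card V} \<and>
     image_mset (vertex_weight V E f) (mset_set V) =
       mset (map (\<lambda>i. a + int i * d) [0..<card V])"

definition cycle_adj :: "nat \<Rightarrow> nat \<Rightarrow> nat \<Rightarrow> bool" where
  "cycle_adj n i j \<longleftrightarrow> i \<noteq> j \<and> (j = (i + 1) mod n \<or> i = (j + 1) mod n)"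

end

theory Submission
  imports Defs
begin

definition prv :: "nat \<Rightarrow> nat \<Rightarrow> nat" where "prv n i = (i + n - 1) mod n"
definition nxt :: "nat \<Rightarrow> nat \<Rightarrow> nat" where "nxt n i = (i + 1) mod n"

lemma prv_eq: "i < n \<Longrightarrow> prv n i = (if i = 0 then n - 1 else i - 1)"
  unfolding prv_def
  by (cases "i = 0") (auto simp: mod_if)

lemma nxt_eq: "i < n \<Longrightarrow> nxt n i = (if i = n - 1 then 0 else i + 1)"
  unfolding nxt_def by (auto simp: mod_if)

lemma nbhd_cycle:
  assumes "n \<ge> 3" "i < n"
  shows "nbhd {0..<n} (cycle_adj n) i = {prv n i, nxt n i}"
proof -
  have a: "i = (y+1) mod n \<longleftrightarrow> y = prv n i" if "y < n" for y
    using assms that by (auto simp: prv_eq mod_if)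
  have b: "y = (i+1) mod n \<longleftrightarrow> y = nxt n i" for y
    by (simp add: nxt_def)
  have c: "prv n i < n" "nxt n i < n" "prv n i \<noteq> i" "nxt n i \<noteq> i"
    using assms by (auto simp: prv_eq nxt_eq)
  have "y \<in> nbhd {0..<n} (cycle_adj n) i \<longleftrightarrow> y = prv n i \<or> y = nxt n i" for y
    unfolding nbhd_def cycle_adj_def using a b c by auto
  then show ?thesis by auto
qed

lemma prv_nxt_ne: "n \<ge> 3 \<Longrightarrow> i < n \<Longrightarrow> prv n i \<noteq> nxt n i"
  by (auto simp: prv_eq nxt_eq)

lemma weight_cycle:
  assumes "n \<ge> 3" "i < n"
  shows "vertex_weight {0..<n} (cycle_adj n) f i = int (f (prv n i)) + int (f (nxt n i))"
  unfolding vertex_weight_def nbhd_cycle[OF assms] using prv_nxt_ne[OF assms] by simp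

lemma bij_prv: "n \<ge> 3 \<Longrightarrow> bij_betw (prv n) {0..<n} {0..<n}"
  unfolding bij_betw_def
  apply (rule conjI)
   apply (auto simp: inj_on_def prv_eq split: if_splits)[1]
  apply (rule endo_inj_surj)
    apply (auto simp: inj_on_def prv_eq split: if_splits)
  done

lemma bij_nxt: "n \<ge> 3 \<Longrightarrow> bij_betw (nxt n) {0..<n} {0..<n}"
  unfolding bij_betw_def
  apply (rule conjI)
   apply (auto simp: inj_on_def nxt_eq split: if_splits)[1]
  apply (rule endo_inj_surj)
    apply (auto simp: inj_on_def nxt_eq split: if_splits)
  done

lemma mset_perm:
  assumes "finite A" "bij_betw \<sigma> A A" "\<And>i. i \<in> A \<Longrightarrow> w i = h (\<sigma> i)"
  shows "image_mset w (mset_set A) = image_mset h (mset_set A)"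
proof -
  have "image_mset w (mset_set A) = image_mset h (image_mset \<sigma> (mset_set A))"
    using assms(1,3) by (auto simp: multiset.map_comp intro!: image_mset_cong)
  also have "image_mset \<sigma> (mset_set A) = mset_set A"
    using assms(2) by (simp add: image_mset_mset_set bij_betw_def)
  finally show ?thesis .
qed

definition gg :: "nat \<Rightarrow> nat \<Rightarrow> nat" where
  "gg m k = (if even k then k div 2 + 1 else m + 1 + (k+1) div 2)"
definition pp :: "nat \<Rightarrow> nat \<Rightarrow> nat" where
  "pp m j = (if even j then j div 2 else m + 1 + j div 2)"

lemma gg_sum:
  assumes "m \<ge> 1" "k < 2*m+1"
  shows "gg m k + gg m (nxt (2*m+1) k) = m + 2 + nxt (2*m+1) k"
proof (cases "k = 2*m")
  case True then show ?thesis using assms by (simp add: gg_def nxt_eq)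
next
  case False
  then have "nxt (2*m+1) k = k + 1" using assms by (simp add: nxt_eq)
  then show ?thesis using False assms by (auto simp: gg_def elim!: evenE oddE)
qed

lemma pp_nxt:
  assumes "m \<ge> 1" "i < 2*m+1"
  shows "pp m (nxt (2*m+1) i) = nxt (2*m+1) (pp m (prv (2*m+1) i))"
proof -
  consider "i = 0" | "i = 2*m" | "i \<noteq> 0" "i \<noteq> 2*m" by blast
  then show ?thesis
  proof cases
    case 1 then show ?thesis using assms by (simp add: pp_def nxt_eq prv_eq)
  next
    case 2 then show ?thesis using assms by (simp add: pp_def nxt_eq prv_eq)
  next
    case 3
    have pl: "pp m (i - 1) < 2*m" using 3 assms by (auto simp: pp_def elim!: evenE oddE)
    show ?thesis using 3 assms pl by (auto simp: pp_def nxt_eq prv_eq elim!: evenE oddE)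
  qed
qed

lemma bij_gg:
  assumes "m \<ge> 1"
  shows "bij_betw (gg m) {0..<2*m+1} {1..2*m+1}"
proof -
  have inj: "inj_on (gg m) {0..<2*m+1}"
    unfolding inj_on_def gg_def by (auto split: if_splits elim!: evenE oddE)
  have sub: "gg m ` {0..<2*m+1} \<subseteq> {1..2*m+1}"
    unfolding gg_def by (auto elim!: evenE oddE)
  have "card (gg m ` {0..<2*m+1}) = card {1..2*m+1}"
    using inj by (simp add: card_image)
  then have "gg m ` {0..<2*m+1} = {1..2*m+1}"
    using sub by (intro card_subset_eq) auto
  then show ?thesis using inj by (simp add: bij_betw_def)
qed

lemma bij_pp:
  assumes "m \<ge> 1"
  shows "bij_betw (pp m) {0..<2*m+1} {0..<2*m+1}"
proof -
  have inj: "inj_on (pp m) {0..<2*m+1}"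
    unfolding inj_on_def pp_def by (auto split: if_splits elim!: evenE oddE)
  have sub: "pp m ` {0..<2*m+1} \<subseteq> {0..<2*m+1}"
    unfolding pp_def by (auto elim!: evenE oddE)
  show ?thesis using inj endo_inj_surj[OF _ sub inj] by (simp add: bij_betw_def)
qed


lemma rhs_mset: "mset (map h [0..<n]) = image_mset h (mset_set {0..<n})"
  by (simp add: mset_map)

lemma construct_odd:
  assumes "m \<ge> 1"
  shows "distance_antimagic {0..<2*m+1} (cycle_adj (2*m+1)) (\<lambda>j. gg m (pp m j)) (int m + 2) 1"
proof -
  let ?n = "2*m+1"
  have n3: "?n \<ge> 3" using assms by simp
  have bijf: "bij_betw (\<lambda>j. gg m (pp m j)) {0..<?n} {1..?n}"
    using bij_betw_trans[OF bij_pp[OF assms] bij_gg[OF assms]] by (simp add: comp_def)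
  have bs: "bij_betw (\<lambda>i. nxt ?n (pp m (prv ?n i))) {0..<?n} {0..<?n}"
    using bij_betw_trans[OF bij_betw_trans[OF bij_prv[OF n3] bij_pp[OF assms]] bij_nxt[OF n3]]
    by (simp add: comp_def)
  have w: "vertex_weight {0..<?n} (cycle_adj ?n) (\<lambda>j. gg m (pp m j)) i
        = (int m + 2) + int (nxt ?n (pp m (prv ?n i))) * 1" if "i \<in> {0..<?n}" for i
  proof -
    have i: "i < ?n" using that by simp
    have k: "pp m (prv ?n i) < ?n"
      using bij_betw_apply[OF bij_pp[OF assms]] bij_betw_apply[OF bij_prv[OF n3]] i by simp
    show ?thesis
      unfolding weight_cycle[OF n3 i] pp_nxt[OF assms i]
      using gg_sum[OF assms k] by (metis (no_types, lifting) mult.right_neutral of_nat_add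
          of_nat_numeral add.assoc)
  qed
  have eqn: "image_mset (vertex_weight {0..<?n} (cycle_adj ?n) (\<lambda>j. gg m (pp m j))) (mset_set {0..<?n})
     = image_mset (\<lambda>i. (int m + 2) + int i * 1) (mset_set {0..<?n})"
    using mset_perm[of "{0..<?n}" "\<lambda>i. nxt ?n (pp m (prv ?n i))"
        "vertex_weight {0..<?n} (cycle_adj ?n) (\<lambda>j. gg m (pp m j))" "\<lambda>i. (int m + 2) + int i * 1", OF _ bs w]
    by blast
  show ?thesis
    unfolding distance_antimagic_def mset_map mset_upt card_atLeastLessThan diff_zero
    using bijf eqn by blast
qed

lemma construct_four:
  "distance_antimagic {0..<4} (cycle_adj 4) (\<lambda>j. [1,2,4,3] ! j) 5 0"
proof -
  have w: "vertex_weight {0..<4} (cycle_adj 4) (\<lambda>j. [1,2,4,3] ! j) i = 5 + int (id i) * 0"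
    if "i \<in> {0..<4}" for i
  proof -
    have "i = 0 \<or> i = 1 \<or> i = 2 \<or> i = 3" using that by auto
    then show ?thesis using that by (auto simp: weight_cycle prv_eq nxt_eq)
  qed
  have b: "bij_betw (\<lambda>j. [1::nat,2,4,3] ! j) {0..<4} {1..4}"
  proof -
    have e: "{0..<4::nat} = {0,1,2,3}" "{1..4::nat} = {1,2,3,4}" by auto
    show ?thesis unfolding e by (auto simp: bij_betw_def inj_on_def)
  qed
  show ?thesis
    unfolding distance_antimagic_def
    using b mset_perm[of "{0..<4}" id "vertex_weight {0..<4} (cycle_adj 4) (\<lambda>j. [1,2,4,3] ! j)"
        "\<lambda>i. 5 + int i * 0", OF _ bij_betw_id w] by (simp add: mset_map del: One_nat_def)
qed

lemma gauss_int: "2 * (\<Sum>i<n. int i) = int n * (int n - 1)"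
  by (induction n) (auto simp: algebra_simps)

lemma gauss_int1: "2 * (\<Sum>i\<in>{1..n}. int i) = int n * (int n + 1)"
  by (induction n) (auto simp: algebra_simps)

lemma necessary:
  assumes n3: "n \<ge> 3" and d0: "d \<ge> 0"
    and da: "distance_antimagic {0..<n} (cycle_adj n) f a d"
  shows "(d = 0 \<and> n = 4) \<or> (d = 1 \<and> odd n)"
proof -
  let ?A = "{0..<n}"
  let ?w = "vertex_weight ?A (cycle_adj n) f"
  have bij: "bij_betw f ?A {1..n}" and eq: "image_mset ?w (mset_set ?A) = image_mset (\<lambda>i. a + int i * d) (mset_set ?A)"
    using da unfolding distance_antimagic_def by (auto simp: mset_map)
  have w: "?w i = int (f (prv n i)) + int (f (nxt n i))" if "i < n" for i
    using weight_cycle[OF n3 that] .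
  have pr: "prv n i < n" "nxt n i < n" "prv n i \<noteq> nxt n i" if "i < n" for i
    using that n3 by (auto simp: prv_eq nxt_eq)
  have fr: "1 \<le> f j \<and> f j \<le> n" if "j < n" for j
    using bij_betw_apply[OF bij] that by auto
  have inj: "inj_on f ?A" using bij by (simp add: bij_betw_def)
  have fne: "f (prv n i) \<noteq> f (nxt n i)" if "i < n" for i
    using inj_on_contraD[OF inj pr(3)[OF that]] pr(1,2)[OF that] by simp
  have wb: "3 \<le> ?w i \<and> ?w i \<le> 2 * int n - 1" if "i < n" for i
    using w[OF that] fr[OF pr(1)[OF that]] fr[OF pr(2)[OF that]] fne[OF that] by auto
  have setw: "?w ` ?A = (\<lambda>i. a + int i * d) ` ?A"
    using arg_cong[OF eq, of set_mset] by simp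
  obtain j where j: "j < n" "?w j = a" using setw n3
    by (metis (no_types, lifting) atLeastLessThan_iff imageE image_eqI le0 mult_zero_left
        of_nat_0 add.right_neutral less_le_trans zero_less_numeral)
  obtain j' where j': "j' < n" "?w j' = a + int (n - 1) * d"
  proof -
    have "a + int (n-1) * d \<in> (\<lambda>i. a + int i * d) ` ?A"
      using n3 by (intro image_eqI[of _ _ "n-1"]) auto
    then show ?thesis using setw that by (metis atLeastLessThan_iff imageE)
  qed
  have "int (n - 1) * d \<le> 2 * int n - 4" using wb[OF j(1)] wb[OF j'(1)] j j' by linarith
  then have d1: "d \<le> 1"
  proof -
    assume h: "int (n - 1) * d \<le> 2 * int n - 4"
    show "d \<le> 1"
    proof (rule ccontr)
      assume "\<not> d \<le> 1"
      then have "d \<ge> 2" by simp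
      then have "int (n-1) * 2 \<le> int (n-1) * d" by (simp add: mult_left_mono)
      then show False using h n3 by simp
    qed
  qed
  have s1: "(\<Sum>i\<in>?A. ?w i) = (\<Sum>i\<in>?A. a + int i * d)"
    using arg_cong[OF eq, of sum_mset] by (simp add: sum_unfold_sum_mset)
  have sf: "(\<Sum>i\<in>?A. int (f i)) = (\<Sum>k\<in>{1..n}. int k)"
    using sum.reindex_bij_betw[OF bij, of int] .
  have sp: "(\<Sum>i\<in>?A. int (f (prv n i))) = (\<Sum>i\<in>?A. int (f i))"
    using sum.reindex_bij_betw[OF bij_prv[OF n3], of "\<lambda>i. int (f i)"] .
  have sn: "(\<Sum>i\<in>?A. int (f (nxt n i))) = (\<Sum>i\<in>?A. int (f i))"
    using sum.reindex_bij_betw[OF bij_nxt[OF n3], of "\<lambda>i. int (f i)"] .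
  have "(\<Sum>i\<in>?A. ?w i) = (\<Sum>i\<in>?A. int (f (prv n i))) + (\<Sum>i\<in>?A. int (f (nxt n i)))"
    by (simp add: w sum.distrib)
  then have L: "2 * (\<Sum>i\<in>?A. ?w i) = 2 * int n * (int n + 1)"
    using sp sn sf gauss_int1[of n] by simp
  have "(\<Sum>i\<in>?A. a + int i * d) = int n * a + d * (\<Sum>i<n. int i)"
    by (simp add: sum.distrib sum_distrib_left sum_distrib_right lessThan_atLeast0 mult.commute)
  then have R0: "2 * (\<Sum>i\<in>?A. a + int i * d) = 2 * int n * a + d * (2 * (\<Sum>i<n. int i))"
    by (simp add: algebra_simps)
  have R: "2 * (\<Sum>i\<in>?A. a + int i * d) = int n * (2 * a + d * (int n - 1))"
    unfolding R0 gauss_int by (simp add: algebra_simps)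
  have key: "int n * (2 * (int n + 1)) = int n * (2 * a + d * (int n - 1))"
    using L R s1 by (simp add: algebra_simps)
  have key2: "2 * (int n + 1) = 2 * a + d * (int n - 1)"
    using key n3 by simp
  consider "d = 0" | "d = 1" using d0 d1 by linarith
  then show ?thesis
  proof cases
    case 2
    then have "int n = 2 * a - 3" using key2 by simp
    then have "odd (int n)" by presburger
    then show ?thesis using 2 by simp
  next
    case 1
    have all: "?w i = a" if "i < n" for i
      using setw 1 that by auto
    have n1: "1 < n" "2 < n" using n3 by auto
    have A: "?w 1 = int (f 0) + int (f (2 mod n))"
      using w[of 1] n1 by (simp add: prv_eq nxt_def numeral_2_eq_2)
    have "3 mod n < n" using n3 by simp
    have B: "?w (3 mod n) = int (f (2 mod n)) + int (f (4 mod n))"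
    proof -
      have e1: "(3 mod n + n - 1) mod n = 2"
      proof (cases "n = 3")
        case True then show ?thesis by simp
      next
        case False then have "3 mod n = 3" using n3 by simp
        moreover have "(n + 2) mod n = 2" unfolding mod_add_self1 using n3 by simp
        ultimately show ?thesis using n3 by (simp add: add.commute)
      qed
      have e2: "(3 mod n + 1) mod n = 4 mod n" using mod_add_left_eq[of "3::nat" n 1] by (simp only: numeral_plus_one semiring_norm)
      show ?thesis using w[of "3 mod n"] n3 e1 e2 unfolding prv_def nxt_def by simp
    qed
    have "?w 1 = ?w (3 mod n)" using all n1 n3 by simp
    then have "f 0 = f (4 mod n)" using A B by simp
    then have "4 mod n = 0" using inj n3 unfolding inj_on_def by (metis atLeastLessThan_iff le0
          mod_less_divisor less_le_trans zero_less_numeral)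
    then have "n dvd 4" by (simp add: mod_eq_0_iff_dvd)
    then have "n \<le> 4" by (simp add: dvd_imp_le)
    then have "n = 4 \<or> n = 3" using n3 by auto
    then have "n = 4" using \<open>n dvd 4\<close> by auto
    then show ?thesis using 1 by simp
  qed
qed

theorem theorem5:
  fixes n :: nat and d :: int
  assumes "n \<ge> 3" and "d \<ge> 0"
  shows "(\<exists>f a. distance_antimagic {0..<n} (cycle_adj n) f a d) \<longleftrightarrow>
         ((d = 0 \<and> n = 4) \<or> (d = 1 \<and> odd n))"
proof
  assume "\<exists>f a. distance_antimagic {0..<n} (cycle_adj n) f a d"
  then show "(d = 0 \<and> n = 4) \<or> (d = 1 \<and> odd n)" using necessary assms by blast
next
  assume h: "(d = 0 \<and> n = 4) \<or> (d = 1 \<and> odd n)"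
  then show "\<exists>f a. distance_antimagic {0..<n} (cycle_adj n) f a d"
  proof
    assume "d = 0 \<and> n = 4" then show ?thesis using construct_four by blast
  next
    assume h2: "d = 1 \<and> odd n"
    then obtain m where m: "n = 2*m+1" by (metis oddE)
    then have "m \<ge> 1" using assms by simp
    then show ?thesis using construct_odd[of m] m h2 by blast
  qed
qed

end
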